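(* Let $f$ be a transcendental meromorphic function projectable via $\exp_1$, written as $f(z)=\ell z+\Phi(e^{2\pi iz})$ with $\ell\in\mathbb{Z}$ and $\Phi$ meromorphic in $\mathbb{C}^*$, and let $g$ be its exponential projection. Then $z^*$ is a pseudoperiodic point of $f$ of minimal type $(p,\sigma)$, where $p\ge1$ and $\sigma\in\mathbb{Z}$, if and only if $e^{2\pi iz^*}$ is a periodic point of $g$ of minimal period $p$. In this case $z^*$ is a solution of $$(\ell^p-1)z+\sum_{j=0}^{p-1}\ell^{p-1-j}\,\Phi\big(g^j(e^{2\pi iz})\big)=\sigma.$$
   Context: $\exp_1(z)=e^{2\pi iz}$; $f$ is projectable via $\exp_1$ if there is $g$ with $g\circ\exp_1=\exp_1\circ f$ wherever defined; then $g(w)=w^\ell e^{2\pi i\Phi(w)}$. A point $z^*\in\mathbb{C}\setminus f^{-1}(\infty)$ is a pseudoperiodic point of type $(p,\sigma)$ of $f$ if $f^p(z^* )=z^*+\sigma$ for some $p\ge1$, $\sigma\in\mathbb{Z}$; it is of minimal type $(p,\sigma)$ if $p$ is the smallest natural number with this property. *)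

theory Defs
  imports "HOL-Complex_Analysis.Complex_Analysis" "HOL-Computational_Algebra.Polynomial"
begin

definition exp1 :: "complex \<Rightarrow> complex" where
  "exp1 z = exp (2 * of_real pi * \<i> * z)"

definition fin_pts :: "(complex \<Rightarrow> complex) \<Rightarrow> complex set" where
  "fin_pts \<Phi> = {w. w \<noteq> 0 \<and> \<not> is_pole \<Phi> w}"

definition transcendental_mero :: "(complex \<Rightarrow> complex) \<Rightarrow> complex set \<Rightarrow> bool" where
  "transcendental_mero f D \<longleftrightarrow>
     \<not> (\<exists>P Q :: complex poly. Q \<noteq> 0 \<and> (\<forall>z\<in>D. poly Q z \<noteq> 0 \<longrightarrow> f z = poly P z / poly Q z))"

definition pseudoperiodic_type ::
  "(complex \<Rightarrow> complex) \<Rightarrow> complex set \<Rightarrow> complex \<Rightarrow> nat \<Rightarrow> int \<Rightarrow> bool" where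
  "pseudoperiodic_type f D z p \<sigma> \<longleftrightarrow>
     p \<ge> 1 \<and> (\<forall>j<p. (f ^^ j) z \<in> D) \<and> (f ^^ p) z = z + of_int \<sigma>"

definition minimal_pseudoperiodic_type ::
  "(complex \<Rightarrow> complex) \<Rightarrow> complex set \<Rightarrow> complex \<Rightarrow> nat \<Rightarrow> int \<Rightarrow> bool" where
  "minimal_pseudoperiodic_type f D z p \<sigma> \<longleftrightarrow>
     pseudoperiodic_type f D z p \<sigma> \<and>
     (\<forall>q. 1 \<le> q \<and> q < p \<longrightarrow> \<not> (\<exists>\<tau>. pseudoperiodic_type f D z q \<tau>))"

definition periodic_min_period ::
  "(complex \<Rightarrow> complex) \<Rightarrow> complex set \<Rightarrow> complex \<Rightarrow> nat \<Rightarrow> bool" where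
  "periodic_min_period g D w p \<longleftrightarrow>
     p \<ge> 1 \<and> (\<forall>j<p. (g ^^ j) w \<in> D) \<and> (g ^^ p) w = w \<and>
     (\<forall>q. 1 \<le> q \<and> q < p \<longrightarrow> (g ^^ q) w \<noteq> w)"

end

theory Submission
  imports Defs
begin

lemma exp1_eq_int:
  assumes "exp1 a = exp1 b" shows "\<exists>k::int. a = b + of_int k"
proof -
  from assms obtain n :: int where n: "2 * of_real pi * \<i> * a = 2 * of_real pi * \<i> * b + (of_int (2 * n) * pi) * \<i>"
    unfolding exp1_def exp_eq by blast
  have "2 * of_real pi * \<i> * a = 2 * of_real pi * \<i> * (b + of_int n)"
    using n by (simp add: algebra_simps)
  then have "a = b + of_int n" by simp
  then show ?thesis by blast
qed

lemma exp1_add_int: "exp1 (z + of_int k) = exp1 z"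
proof -
  have "exp1 (z + of_int k) = exp1 z * exp (of_int k * (2 * of_real pi * \<i>))"
    unfolding exp1_def by (simp add: algebra_simps exp_add)
  also have "exp (of_int k * (2 * of_real pi * \<i>)) = 1"
    using exp_power_int[of "2 * of_real pi * \<i>" k] by simp
  finally show ?thesis by simp
qed

theorem lemma4p3:
  fixes f g \<Phi> :: "complex \<Rightarrow> complex" and l :: int
    and z :: complex and p :: nat and \<sigma> :: int
  assumes mero: "\<Phi> nicely_meromorphic_on (- {0})"
    and hf: "\<And>z. f z = of_int l * z + \<Phi> (exp1 z)"
    and hg: "\<And>w. w \<in> fin_pts \<Phi> \<Longrightarrow> g w = w powi l * exp (2 * of_real pi * \<i> * \<Phi> w)"
    and transc: "transcendental_mero f {z. exp1 z \<in> fin_pts \<Phi>}"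
    and p: "p \<ge> 1"
  shows "((\<exists>\<tau>. minimal_pseudoperiodic_type f {z. exp1 z \<in> fin_pts \<Phi>} z p \<tau>) \<longleftrightarrow>
           periodic_min_period g (fin_pts \<Phi>) (exp1 z) p)
         \<and> (minimal_pseudoperiodic_type f {z. exp1 z \<in> fin_pts \<Phi>} z p \<sigma> \<longrightarrow>
           (of_int l ^ p - 1) * z
             + (\<Sum>j<p. of_int l ^ (p - 1 - j) * \<Phi> ((g ^^ j) (exp1 z))) = of_int \<sigma>)"
proof -
  define D where "D = {z. exp1 z \<in> fin_pts \<Phi>}"
  have A: "exp1 (f x) = g (exp1 x)" if "exp1 x \<in> fin_pts \<Phi>" for x
  proof -
    have "exp1 (f x) = exp (of_int l * (2 * of_real pi * \<i> * x)) * exp (2 * of_real pi * \<i> * \<Phi> (exp1 x))"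
      unfolding hf exp1_def by (simp add: algebra_simps exp_add[symmetric])
    also have "exp (of_int l * (2 * of_real pi * \<i> * x)) = exp1 x powi l"
      unfolding exp1_def by (simp add: exp_power_int)
    finally show ?thesis using hg[OF that] by simp
  qed
  have B: "exp1 ((f ^^ j) z) = (g ^^ j) (exp1 z)" if "\<forall>i<j. (f ^^ i) z \<in> D" for j
    using that
  proof (induction j)
    case 0 then show ?case by simp
  next
    case (Suc j)
    then have "exp1 ((f ^^ j) z) = (g ^^ j) (exp1 z)" by simp
    moreover have "exp1 ((f ^^ j) z) \<in> fin_pts \<Phi>" using Suc.prems D_def by auto
    ultimately show ?case using A by simp
  qed
  have C: "(\<forall>i<j. (f ^^ i) z \<in> D) \<longleftrightarrow> (\<forall>i<j. (g ^^ i) (exp1 z) \<in> fin_pts \<Phi>)" for j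
  proof (induction j)
    case 0 then show ?case by simp
  next
    case (Suc j)
    show ?case
    proof
      assume h: "\<forall>i<Suc j. (f ^^ i) z \<in> D"
      show "\<forall>i<Suc j. (g ^^ i) (exp1 z) \<in> fin_pts \<Phi>"
      proof (intro allI impI)
        fix i assume "i < Suc j"
        then have "\<forall>i'<i. (f ^^ i') z \<in> D" "(f ^^ i) z \<in> D" using h by auto
        then show "(g ^^ i) (exp1 z) \<in> fin_pts \<Phi>" using B D_def by auto
      qed
    next
      assume h: "\<forall>i<Suc j. (g ^^ i) (exp1 z) \<in> fin_pts \<Phi>"
      then have hj: "\<forall>i<j. (f ^^ i) z \<in> D" using Suc.IH by auto
      have "(f ^^ j) z \<in> D" using B[OF hj] h D_def by auto
      with hj show "\<forall>i<Suc j. (f ^^ i) z \<in> D" using less_Suc_eq by auto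
    qed
  qed
  have F: "(f ^^ j) z = of_int l ^ j * z + (\<Sum>i<j. of_int l ^ (j - 1 - i) * \<Phi> ((g ^^ i) (exp1 z)))"
    if "\<forall>i<j. (f ^^ i) z \<in> D" for j
    using that
  proof (induction j)
    case 0 then show ?case by simp
  next
    case (Suc j)
    then have ih: "(f ^^ j) z = of_int l ^ j * z + (\<Sum>i<j. of_int l ^ (j - 1 - i) * \<Phi> ((g ^^ i) (exp1 z)))"
      by simp
    have e: "exp1 ((f ^^ j) z) = (g ^^ j) (exp1 z)" using B Suc.prems by simp
    have s: "of_int l * (\<Sum>i<j. of_int l ^ (j - 1 - i) * \<Phi> ((g ^^ i) (exp1 z)))
          = (\<Sum>i<j. of_int l ^ (Suc j - 1 - i) * \<Phi> ((g ^^ i) (exp1 z)))"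
      unfolding sum_distrib_left
    proof (rule sum.cong)
      fix i assume "i \<in> {..<j}"
      then have "Suc j - 1 - i = Suc (j - 1 - i)" by auto
      then show "of_int l * (of_int l ^ (j - 1 - i) * \<Phi> ((g ^^ i) (exp1 z))) =
          of_int l ^ (Suc j - 1 - i) * \<Phi> ((g ^^ i) (exp1 z))" by simp
    qed simp
    have "(f ^^ Suc j) z = of_int l * (f ^^ j) z + \<Phi> ((g ^^ j) (exp1 z))"
      using hf e by simp
    also have "\<dots> = of_int l ^ Suc j * z + (\<Sum>i<Suc j. of_int l ^ (Suc j - 1 - i) * \<Phi> ((g ^^ i) (exp1 z)))"
      unfolding ih distrib_left s by simp
    finally show ?case .
  qed
  have part1: "(\<exists>\<tau>. minimal_pseudoperiodic_type f D z p \<tau>) \<longleftrightarrow> periodic_min_period g (fin_pts \<Phi>) (exp1 z) p"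
  proof
    assume "\<exists>\<tau>. minimal_pseudoperiodic_type f D z p \<tau>"
    then obtain \<tau> where h: "p \<ge> 1" "\<forall>j<p. (f ^^ j) z \<in> D" "(f ^^ p) z = z + of_int \<tau>"
      and mn: "\<forall>q. 1 \<le> q \<and> q < p \<longrightarrow> \<not> (\<exists>\<tau>. pseudoperiodic_type f D z q \<tau>)"
      unfolding minimal_pseudoperiodic_type_def pseudoperiodic_type_def by blast
    have "(g ^^ p) (exp1 z) = exp1 z" using B[OF h(2)] h(3) exp1_add_int by simp
    moreover have "\<forall>j<p. (g ^^ j) (exp1 z) \<in> fin_pts \<Phi>" using C h(2) by blast
    moreover have "(g ^^ q) (exp1 z) \<noteq> exp1 z" if q: "1 \<le> q" "q < p" for q
    proof
      assume eq: "(g ^^ q) (exp1 z) = exp1 z"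
      have hq: "\<forall>j<q. (f ^^ j) z \<in> D" using h(2) q by auto
      obtain k where "(f ^^ q) z = z + of_int k" using exp1_eq_int B[OF hq] eq by metis
      then have "pseudoperiodic_type f D z q k" using hq q unfolding pseudoperiodic_type_def by blast
      then show False using mn q by blast
    qed
    ultimately show "periodic_min_period g (fin_pts \<Phi>) (exp1 z) p"
      unfolding periodic_min_period_def using h(1) by blast
  next
    assume "periodic_min_period g (fin_pts \<Phi>) (exp1 z) p"
    then have h: "p \<ge> 1" "\<forall>j<p. (g ^^ j) (exp1 z) \<in> fin_pts \<Phi>" "(g ^^ p) (exp1 z) = exp1 z"
      and mn: "\<forall>q. 1 \<le> q \<and> q < p \<longrightarrow> (g ^^ q) (exp1 z) \<noteq> exp1 z"
      unfolding periodic_min_period_def by auto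
    have hD: "\<forall>j<p. (f ^^ j) z \<in> D" using C h(2) by blast
    obtain \<tau> where t: "(f ^^ p) z = z + of_int \<tau>" using exp1_eq_int B[OF hD] h(3) by metis
    have "\<not> (\<exists>\<tau>. pseudoperiodic_type f D z q \<tau>)" if q: "1 \<le> q" "q < p" for q
    proof
      assume "\<exists>\<tau>. pseudoperiodic_type f D z q \<tau>"
      then obtain \<tau>' where hq: "\<forall>j<q. (f ^^ j) z \<in> D" "(f ^^ q) z = z + of_int \<tau>'"
        unfolding pseudoperiodic_type_def by blast
      have "(g ^^ q) (exp1 z) = exp1 z" using B[OF hq(1)] hq(2) exp1_add_int by simp
      then show False using mn q by blast
    qed
    then have "minimal_pseudoperiodic_type f D z p \<tau>"
      unfolding minimal_pseudoperiodic_type_def pseudoperiodic_type_def using h(1) hD t by blast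
    then show "\<exists>\<tau>. minimal_pseudoperiodic_type f D z p \<tau>" by blast
  qed
  have part2: "(of_int l ^ p - 1) * z
             + (\<Sum>j<p. of_int l ^ (p - 1 - j) * \<Phi> ((g ^^ j) (exp1 z))) = of_int \<sigma>"
    if "minimal_pseudoperiodic_type f D z p \<sigma>"
  proof -
    from that have h: "\<forall>j<p. (f ^^ j) z \<in> D" "(f ^^ p) z = z + of_int \<sigma>"
      unfolding minimal_pseudoperiodic_type_def pseudoperiodic_type_def by auto
    from F[OF h(1)] h(2) show ?thesis by (simp add: algebra_simps)
  qed
  show ?thesis using part1 part2 unfolding D_def by blast
qed

end
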